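(* (i) For all $\tau\in\mathbb{H}$ with $e^{-2\pi\operatorname{Im}\tau}\le\frac13$, $$|\Delta(\tau)|\ge e^{-2\pi\operatorname{Im}\tau}\Big(1-e^{-2\pi\operatorname{Im}\tau}-e^{-4\pi\operatorname{Im}\tau}-\frac{2e^{-4\pi\operatorname{Im}\tau}}{1-e^{-2\pi\operatorname{Im}\tau}}\Big)^{24}.$$ (ii) For all $\tau\in\mathbb{H}$, $$|\Delta(\tau)|\le e^{-2\pi\operatorname{Im}\tau}\Big(1+2e^{-2\pi\operatorname{Im}\tau}+\frac{2e^{-8\pi\operatorname{Im}\tau}}{1-e^{-4\pi\operatorname{Im}\tau}}\Big)^{24}.$$
   Context: $\mathbb{H}$ is the upper half plane, $q=e^{2\pi i\tau}$, and $\Delta(\tau)=q\prod_{n\ge1}(1-q^n)^{24}$. *)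

theory Defs
  imports "HOL-Analysis.Analysis"
begin

definition nome :: "complex \<Rightarrow> complex" where
  "nome \<tau> = exp (2 * complex_of_real pi * \<i> * \<tau>)"

definition modular_Delta :: "complex \<Rightarrow> complex" where
  "modular_Delta \<tau> = nome \<tau> * (\<Prod>n. (1 - nome \<tau> ^ Suc n) ^ 24)"

end

theory Submission
  imports Defs
begin

definition Af :: "complex \<Rightarrow> nat \<Rightarrow> nat \<Rightarrow> complex" where
  "Af q n j = (\<Prod>i\<in>{j<..n}. 1 - q ^ i)"

fun wf :: "complex \<Rightarrow> nat \<Rightarrow> complex" where
  "wf q 0 = 1"
| "wf q (Suc j) = - (q ^ Suc j) * wf q j"

definition Tf :: "complex \<Rightarrow> nat \<Rightarrow> complex" where
  "Tf q n = (\<Sum>j\<le>n. Af q n j * q ^ (n * j) * wf q j)"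

lemma Af_Suc: "j \<le> n \<Longrightarrow> Af q (Suc n) j = Af q n j * (1 - q ^ Suc n)"
proof -
  assume "j \<le> n"
  then have "{j<..Suc n} = insert (Suc n) {j<..n}" by auto
  then show ?thesis unfolding Af_def by (simp add: mult.commute)
qed

lemma Af_diag: "Af q n n = 1" unfolding Af_def by simp

lemma Af_down: "i < n \<Longrightarrow> Af q n i = (1 - q ^ Suc i) * Af q n (Suc i)"
proof -
  assume "i < n"
  then have "{i<..n} = insert (Suc i) {Suc i<..n}" by auto
  then show ?thesis unfolding Af_def by simp
qed

lemma Tf_Suc: "Tf q (Suc n) = Tf q n + q ^ ((n+1)^2) * (wf q (Suc n) - wf q n)"
proof -
  define Y where "Y = (\<Sum>i<n. Af q n i * q ^ ((n+1)*(i+1)) * wf q i)"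
  have E1: "Tf q (Suc n) = (\<Sum>j\<le>n. Af q n j * q ^ ((n+1)*j) * wf q j)
      - (\<Sum>j\<le>n. Af q n j * q ^ ((n+1)*(j+1)) * wf q j) + q ^ ((n+1)^2) * wf q (Suc n)"
  proof -
    have "Tf q (Suc n) = (\<Sum>j\<le>n. Af q (Suc n) j * q ^ (Suc n * j) * wf q j)
         + Af q (Suc n) (Suc n) * q ^ (Suc n * Suc n) * wf q (Suc n)"
      unfolding Tf_def by simp
    also have "(\<Sum>j\<le>n. Af q (Suc n) j * q ^ (Suc n * j) * wf q j)
       = (\<Sum>j\<le>n. Af q n j * q ^ ((n+1)*j) * wf q j - Af q n j * q ^ ((n+1)*(j+1)) * wf q j)"
    proof (rule sum.cong)
      fix j assume "j \<in> {..n}"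
      then have "j \<le> n" by simp
      have "q ^ ((n+1)*(j+1)) = q ^ ((n+1)*j) * q ^ Suc n"
        by (simp add: power_add[symmetric] algebra_simps)
      then show "Af q (Suc n) j * q ^ (Suc n * j) * wf q j
          = Af q n j * q ^ ((n+1)*j) * wf q j - Af q n j * q ^ ((n+1)*(j+1)) * wf q j"
        apply (subst Af_Suc[OF \<open>j \<le> n\<close>])
        apply (subst \<open>q ^ ((n+1)*(j+1)) = q ^ ((n+1)*j) * q ^ Suc n\<close>)
        by (simp add: algebra_simps)
    qed simp
    finally show ?thesis by (simp add: sum_subtractf Af_diag power2_eq_square)
  qed
  have E2: "(\<Sum>j\<le>n. Af q n j * q ^ ((n+1)*j) * wf q j) - Tf q n = Y"
  proof -
    have "(\<Sum>j\<le>n. Af q n j * q ^ ((n+1)*j) * wf q j) - Tf q n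
       = (\<Sum>j\<le>n. Af q n j * q ^ (n*j) * wf q j * (q ^ j - 1))"
      unfolding Tf_def by (simp add: sum_subtractf[symmetric] algebra_simps power_add)
    also have "\<dots> = (\<Sum>i<n. Af q n (Suc i) * q ^ (n*Suc i) * wf q (Suc i) * (q ^ Suc i - 1))"
      by (subst sum.atMost_shift) simp
    also have "\<dots> = Y" unfolding Y_def
    proof (rule sum.cong)
      fix i assume "i \<in> {..<n}"
      then have "i < n" by simp
      have "q ^ ((n+1)*(i+1)) = q ^ (n * Suc i) * q ^ Suc i"
        by (simp add: power_add[symmetric] algebra_simps)
      then show "Af q n (Suc i) * q ^ (n*Suc i) * wf q (Suc i) * (q ^ Suc i - 1)
          = Af q n i * q ^ ((n+1)*(i+1)) * wf q i"
        apply (subst Af_down[OF \<open>i < n\<close>])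
        apply (subst \<open>q ^ ((n+1)*(i+1)) = q ^ (n * Suc i) * q ^ Suc i\<close>)
        by (simp add: algebra_simps)
    qed simp
    finally show ?thesis .
  qed
  have E3: "(\<Sum>j\<le>n. Af q n j * q ^ ((n+1)*(j+1)) * wf q j) = Y + q ^ ((n+1)^2) * wf q n"
    unfolding Y_def by (simp add: lessThan_Suc_atMost[symmetric] Af_diag power2_eq_square)
  show ?thesis using E1 E2 E3 by (simp add: algebra_simps)
qed

lemma wf_norm: "norm q \<le> 1 \<Longrightarrow> norm (wf q j) \<le> 1"
proof (induction j)
  case (Suc j)
  have "norm (wf q (Suc j)) = norm q ^ Suc j * norm (wf q j)"
    by (simp add: norm_mult norm_power)
  also have "\<dots> \<le> 1 * 1"
    using Suc by (intro mult_mono power_le_one) auto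
  finally show ?case by simp
qed simp

lemma Tf_bound:
  assumes "norm q \<le> 1"
  shows "norm (Tf q n) \<le> 1 + (\<Sum>k<n. 2 * norm q ^ ((k+1)^2))"
proof (induction n)
  case 0 then show ?case by (simp add: Tf_def Af_def)
next
  case (Suc n)
  have "norm (q ^ ((n+1)^2) * (wf q (Suc n) - wf q n)) = norm q ^ ((n+1)^2) * norm (wf q (Suc n) - wf q n)"
    by (simp add: norm_mult norm_power)
  also have "\<dots> \<le> norm q ^ ((n+1)^2) * 2"
  proof (rule mult_left_mono)
    have "norm (wf q (Suc n) - wf q n) \<le> norm (wf q (Suc n)) + norm (wf q n)" by (rule norm_triangle_ineq4)
    also have "\<dots> \<le> 2" using wf_norm[OF assms, of "Suc n"] wf_norm[OF assms, of n] by simp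
    finally show "norm (wf q (Suc n) - wf q n) \<le> 2" .
  qed simp
  finally have h: "norm (q ^ ((n+1)^2) * (wf q (Suc n) - wf q n)) \<le> 2 * norm q ^ ((n+1)^2)" by simp
  have "norm (Tf q (Suc n)) \<le> norm (Tf q n) + norm (q ^ ((n+1)^2) * (wf q (Suc n) - wf q n))"
    unfolding Tf_Suc by (rule norm_triangle_ineq)
  then show ?case using Suc h by simp
qed

lemma sq_sum_bound:
  fixes r :: real
  assumes "0 \<le> r" "r < 1"
  shows "(\<Sum>k<n. 2 * r ^ ((k+1)^2)) \<le> 2*r + 2*r^4/(1-r^2)"
proof (cases n)
  case 0
  have "r^2 < 1" using assms by (simp add: power_less_one_iff)
  then show ?thesis using 0 assms by simp
next
  case (Suc m)
  have r2: "r^2 < 1" using assms by (simp add: power_less_one_iff)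
  have "(\<Sum>k<n. 2 * r ^ ((k+1)^2)) = 2 * r + (\<Sum>k<m. 2 * r ^ ((k+2)^2))"
    unfolding Suc by (subst sum.lessThan_Suc_shift) (simp add: numeral_2_eq_2)
  also have "(\<Sum>k<m. 2 * r ^ ((k+2)^2)) \<le> (\<Sum>k<m. 2 * r^4 * (r^2)^k)"
  proof (rule sum_mono)
    fix k assume "k \<in> {..<m}"
    have "r ^ ((k+2)^2) \<le> r ^ (4 + 2*k)"
      using assms by (intro power_decreasing) (auto simp: power2_eq_square algebra_simps)
    then show "2 * r ^ ((k+2)^2) \<le> 2 * r^4 * (r^2)^k"
      by (simp add: power_add power_mult)
  qed
  also have "\<dots> = 2 * r^4 * (\<Sum>k<m. (r^2)^k)" by (simp add: sum_distrib_left)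
  also have "(\<Sum>k<m. (r^2)^k) = (1 - (r^2)^m) / (1 - r^2)"
    using r2 by (subst sum_gp_strict) simp
  also have "\<dots> \<le> 1 / (1 - r^2)"
    using r2 assms by (intro divide_right_mono) auto
  finally show ?thesis using assms by (simp add: mult_left_mono)
qed

lemma Af_norm:
  assumes "norm q < 1"
  shows "norm (Af q n j) \<le> exp (1 / (1 - norm q))"
proof -
  let ?r = "norm q"
  have "norm (Af q n j) = (\<Prod>i\<in>{j<..n}. norm (1 - q ^ i))"
    unfolding Af_def by (simp add: prod_norm)
  also have "\<dots> \<le> (\<Prod>i\<in>{j<..n}. exp (?r ^ i))"
  proof (rule prod_mono)
    fix i
    have "norm (1 - q ^ i) \<le> 1 + ?r ^ i"
      using norm_triangle_ineq4[of 1 "q^i"] by (simp add: norm_power)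
    also have "\<dots> \<le> exp (?r ^ i)" by (rule exp_ge_add_one_self)
    finally show "0 \<le> norm (1 - q ^ i) \<and> norm (1 - q ^ i) \<le> exp (?r ^ i)" by simp
  qed
  also have "\<dots> = exp (\<Sum>i\<in>{j<..n}. ?r ^ i)" by (simp add: exp_sum)
  also have "(\<Sum>i\<in>{j<..n}. ?r ^ i) \<le> (\<Sum>i<Suc n. ?r ^ i)"
    by (rule sum_mono2) auto
  also have "(\<Sum>i<Suc n. ?r ^ i) = (1 - ?r ^ Suc n) / (1 - ?r)"
    using assms by (subst sum_gp_strict) simp
  also have "\<dots> \<le> 1 / (1 - ?r)"
    using assms by (intro divide_right_mono) auto
  finally show ?thesis by simp
qed

lemma Tf_rem:
  assumes "norm q < 1"
  shows "norm (Tf q n - Af q n 0) \<le> real n * exp (1 / (1 - norm q)) * norm q ^ n"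
proof -
  let ?C = "exp (1 / (1 - norm q))"
  have "Tf q n - Af q n 0 = (\<Sum>i<n. Af q n (Suc i) * q ^ (n * Suc i) * wf q (Suc i))"
    unfolding Tf_def by (subst sum.atMost_shift) simp
  also have "norm \<dots> \<le> (\<Sum>i<n. norm (Af q n (Suc i) * q ^ (n * Suc i) * wf q (Suc i)))"
    by (rule norm_sum)
  also have "\<dots> \<le> (\<Sum>i<n. ?C * norm q ^ n)"
  proof (rule sum_mono)
    fix i assume "i \<in> {..<n}"
    have "norm (Af q n (Suc i) * q ^ (n * Suc i) * wf q (Suc i))
        = norm (Af q n (Suc i)) * norm q ^ (n * Suc i) * norm (wf q (Suc i))"
      by (simp add: norm_mult norm_power)
    also have "\<dots> \<le> ?C * norm q ^ n * 1"
      using Af_norm[OF assms] wf_norm[of q "Suc i"] assms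
      by (intro mult_mono power_decreasing) auto
    finally show "norm (Af q n (Suc i) * q ^ (n * Suc i) * wf q (Suc i)) \<le> ?C * norm q ^ n" by simp
  qed
  finally show ?thesis by simp
qed

lemma Af0: "Af q (Suc n) 0 = (\<Prod>i\<le>n. 1 - q ^ Suc i)"
proof (induction n)
  case 0
  have "{0<..Suc 0} = {Suc 0}" by auto
  then show ?case by (simp add: Af_def)
next
  case (Suc n)
  then show ?case by (simp add: Af_Suc[of 0 "Suc n"])
qed

lemma prod_one_minus_ge:
  fixes a :: "nat \<Rightarrow> real"
  assumes "finite A" "\<And>i. i \<in> A \<Longrightarrow> 0 \<le> a i \<and> a i \<le> 1"
  shows "(\<Prod>i\<in>A. 1 - a i) \<ge> 1 - (\<Sum>i\<in>A. a i) \<and> (\<Prod>i\<in>A. 1 - a i) \<le> 1 \<and> 0 \<le> (\<Prod>i\<in>A. 1 - a i)"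
  using assms
proof (induction A rule: finite_induct)
  case (insert x F)
  then have ih: "(\<Prod>i\<in>F. 1 - a i) \<ge> 1 - (\<Sum>i\<in>F. a i)" "(\<Prod>i\<in>F. 1 - a i) \<le> 1" "0 \<le> (\<Prod>i\<in>F. 1 - a i)"
    and ax: "0 \<le> a x" "a x \<le> 1" by auto
  let ?P = "\<Prod>i\<in>F. 1 - a i"
  have "?P * (1 - a x) = ?P - ?P * a x" by (simp add: algebra_simps)
  moreover have "?P * a x \<le> a x" using ih ax by (simp add: mult_left_le_one_le)
  moreover have "?P * a x \<le> ?P" using ih ax by (simp add: mult_left_le)
  moreover have "?P * (1 - a x) \<le> 1" using ih ax by (intro mult_le_one) auto
  ultimately have "?P * (1 - a x) \<ge> 1 - (a x + (\<Sum>i\<in>F. a i))" "?P * (1 - a x) \<le> 1"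
    "0 \<le> ?P * (1 - a x)" using ih ax by auto
  then show ?case using insert by (simp add: mult.commute)
qed simp

lemma prod_conv:
  fixes q :: complex
  assumes "norm q < 1"
  shows "convergent_prod (\<lambda>i. 1 - q ^ Suc i)"
proof -
  have "summable (\<lambda>i. norm ((1 - q ^ Suc i) - 1))"
    using assms by (simp add: norm_power norm_mult summable_mult summable_geometric)
  then show ?thesis
    by (intro abs_convergent_prod_imp_convergent_prod summable_imp_abs_convergent_prod)
qed

lemma L_upper:
  fixes q :: complex
  assumes "norm q < 1"
  shows "norm (prodinf (\<lambda>i. 1 - q ^ Suc i)) \<le> 1 + 2 * norm q + 2 * norm q ^ 4 / (1 - norm q ^ 2)"
proof -
  let ?r = "norm q" and ?C = "exp (1 / (1 - norm q))"
  let ?U = "1 + 2 * norm q + 2 * norm q ^ 4 / (1 - norm q ^ 2)"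
  have lim: "(\<lambda>n. norm (\<Prod>i\<le>n. 1 - q ^ Suc i)) \<longlonglongrightarrow> norm (prodinf (\<lambda>i. 1 - q ^ Suc i))"
    by (intro tendsto_norm convergent_prod_LIMSEQ[OF prod_conv[OF assms]])
  have z: "(\<lambda>n. real n * ?r ^ n) \<longlonglongrightarrow> 0"
    using powser_times_n_limit_0[of ?r] assms by simp
  have lim2: "(\<lambda>n. ?U + ?C * (real (Suc n) * ?r ^ Suc n)) \<longlonglongrightarrow> ?U + ?C * 0"
    by (intro tendsto_intros LIMSEQ_Suc[OF z])
  have le: "norm (\<Prod>i\<le>n. 1 - q ^ Suc i) \<le> ?U + ?C * (real (Suc n) * ?r ^ Suc n)" for n
  proof -
    have "norm (\<Prod>i\<le>n. 1 - q ^ Suc i) = norm (Tf q (Suc n) - (Tf q (Suc n) - Af q (Suc n) 0))"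
      by (simp add: Af0)
    also have "\<dots> \<le> norm (Tf q (Suc n)) + norm (Tf q (Suc n) - Af q (Suc n) 0)"
      by (rule norm_triangle_ineq4)
    also have "\<dots> \<le> ?U + real (Suc n) * ?C * ?r ^ Suc n"
      using Tf_bound[of q "Suc n"] sq_sum_bound[of ?r "Suc n"] Tf_rem[OF assms, of "Suc n"] assms
      by simp
    finally show ?thesis by (simp add: algebra_simps)
  qed
  show ?thesis
    using LIMSEQ_le[OF lim lim2] le by auto
qed

lemma L_lower:
  fixes q :: complex
  assumes "norm q < 1"
  shows "norm (prodinf (\<lambda>i. 1 - q ^ Suc i)) \<ge> 1 - norm q / (1 - norm q)"
proof -
  let ?r = "norm q"
  have lim: "(\<lambda>n. norm (\<Prod>i\<le>n. 1 - q ^ Suc i)) \<longlonglongrightarrow> norm (prodinf (\<lambda>i. 1 - q ^ Suc i))"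
    by (intro tendsto_norm convergent_prod_LIMSEQ[OF prod_conv[OF assms]])
  have ge: "1 - ?r / (1 - ?r) \<le> norm (\<Prod>i\<le>n. 1 - q ^ Suc i)" for n
  proof -
    have "(\<Sum>i\<le>n. ?r ^ Suc i) = ?r * (\<Sum>i<Suc n. ?r ^ i)"
      by (simp add: sum_distrib_left lessThan_Suc_atMost)
    also have "(\<Sum>i<Suc n. ?r ^ i) = (1 - ?r ^ Suc n) / (1 - ?r)"
      using assms by (subst sum_gp_strict) simp
    also have "?r * \<dots> \<le> ?r * (1 / (1 - ?r))"
      using assms by (intro mult_left_mono divide_right_mono) auto
    finally have s: "(\<Sum>i\<le>n. ?r ^ Suc i) \<le> ?r / (1 - ?r)" by simp
    have "1 - (\<Sum>i\<le>n. ?r ^ Suc i) \<le> (\<Prod>i\<le>n. 1 - ?r ^ Suc i)"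
    proof -
      have pw: "\<And>i. i \<in> {..n} \<Longrightarrow> 0 \<le> ?r ^ Suc i \<and> ?r ^ Suc i \<le> 1"
        using assms by (intro conjI power_le_one) auto
      show ?thesis using prod_one_minus_ge[of "{..n}" "\<lambda>i. ?r ^ Suc i", OF _ pw] by blast
    qed
    also have "\<dots> \<le> (\<Prod>i\<le>n. norm (1 - q ^ Suc i))"
    proof (rule prod_mono)
      fix i
      have "?r ^ Suc i \<le> 1" using assms by (intro power_le_one) auto
      moreover have "1 - ?r ^ Suc i \<le> norm (1 - q ^ Suc i)"
        using norm_triangle_ineq2[of 1 "q ^ Suc i"] by (simp add: norm_power norm_mult)
      ultimately show "0 \<le> 1 - ?r ^ Suc i \<and> 1 - ?r ^ Suc i \<le> norm (1 - q ^ Suc i)" by simp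
    qed
    also have "\<dots> = norm (\<Prod>i\<le>n. 1 - q ^ Suc i)" by (simp add: prod_norm)
    finally show ?thesis using s by simp
  qed
  show ?thesis using LIMSEQ_le_const[OF lim] ge by auto
qed

lemma real_ineq:
  fixes r :: real
  assumes "0 < r" "r \<le> 1/3"
  shows "0 \<le> 1 - r - r^2 - 2 * r^2 / (1 - r)"
    and "1 - r - r^2 - 2 * r^2 / (1 - r) \<le> 1 - r / (1 - r)"
proof -
  have p: "0 < 1 - r" using assms by simp
  have "2 * r^2 / (1 - r) \<le> 1 - r - r^2"
  proof -
    have "2 * r^2 \<le> (1 - r - r^2) * (1 - r)"
    proof -
      have "r^2 \<le> r * (1/3)" using assms by (simp add: power2_eq_square)
      moreover have "r^3 \<ge> 0" using assms by simp
      moreover have "(1-r-r^2)*(1-r) = 1 - 2*r + r^3" by (simp add: algebra_simps power2_eq_square power3_eq_cube)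
      ultimately show ?thesis using assms by linarith
    qed
    then show ?thesis using p by (simp add: divide_le_eq)
  qed
  then show "0 \<le> 1 - r - r^2 - 2 * r^2 / (1 - r)" by simp
  have "r / (1 - r) \<le> r + r^2 + 2 * r^2 / (1 - r)"
  proof -
    have "r \<le> (r + r^2) * (1 - r) + 2 * r^2"
    proof -
      have "r^3 \<le> 2 * r^2" using assms by (simp add: power2_eq_square power3_eq_cube)
      moreover have "(r + r^2) * (1 - r) + 2 * r^2 = r + 2*r^2 - r^3"
        by (simp add: algebra_simps power2_eq_square power3_eq_cube)
      moreover have "r^3 \<le> r^2" using assms by (simp add: power2_eq_square power3_eq_cube)
      ultimately show ?thesis using assms by (simp add: power2_eq_square)
    qed
    moreover have "(r + r^2 + 2*r^2/(1-r)) * (1-r) = (r+r^2)*(1-r) + 2*r^2"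
      using p by (simp add: distrib_right)
    ultimately show ?thesis using pos_divide_le_eq[OF p] by simp
  qed
  then show "1 - r - r^2 - 2 * r^2 / (1 - r) \<le> 1 - r / (1 - r)" by simp
qed

lemma norm_nome: "norm (nome \<tau>) = exp (-2 * pi * Im \<tau>)"
  unfolding nome_def by (simp add: norm_exp_eq_Re)

lemma Delta_eq: "norm (nome \<tau>) < 1 \<Longrightarrow>
   norm (modular_Delta \<tau>) = norm (nome \<tau>) * norm (prodinf (\<lambda>i. 1 - nome \<tau> ^ Suc i)) ^ 24"
proof -
  assume a: "norm (nome \<tau>) < 1"
  show ?thesis unfolding modular_Delta_def
    by (simp only: prodinf_power[OF prod_conv[OF a]] norm_mult norm_power)
qed

theorem proposition3p4:
  shows "(\<forall>\<tau>::complex. Im \<tau> > 0 \<and> exp (-2 * pi * Im \<tau>) \<le> 1/3 \<longrightarrow>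
            norm (modular_Delta \<tau>) \<ge>
              exp (-2 * pi * Im \<tau>) *
              (1 - exp (-2 * pi * Im \<tau>) - exp (-4 * pi * Im \<tau>)
                 - 2 * exp (-4 * pi * Im \<tau>) / (1 - exp (-2 * pi * Im \<tau>))) ^ 24)
       \<and> (\<forall>\<tau>::complex. Im \<tau> > 0 \<longrightarrow>
            norm (modular_Delta \<tau>) \<le>
              exp (-2 * pi * Im \<tau>) *
              (1 + 2 * exp (-2 * pi * Im \<tau>)
                 + 2 * exp (-8 * pi * Im \<tau>) / (1 - exp (-4 * pi * Im \<tau>))) ^ 24)"
proof (intro conjI allI impI)
  fix \<tau> :: complex
  assume h: "Im \<tau> > 0 \<and> exp (-2 * pi * Im \<tau>) \<le> 1/3"
  define r where "r = exp (-2 * pi * Im \<tau>)"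
  have r2: "exp (-4 * pi * Im \<tau>) = r^2" unfolding r_def
    by (simp add: power2_eq_square exp_add[symmetric])
  have rpos: "0 < r" unfolding r_def by simp
  have r13: "r \<le> 1/3" using h unfolding r_def by simp
  have nq: "norm (nome \<tau>) = r" by (simp add: norm_nome r_def)
  have q1: "norm (nome \<tau>) < 1" using nq r13 by simp
  let ?L = "norm (prodinf (\<lambda>i. 1 - nome \<tau> ^ Suc i))"
  have "1 - r - r^2 - 2 * r^2 / (1 - r) \<le> ?L"
    using real_ineq[OF rpos r13] L_lower[OF q1] nq by simp
  then have "(1 - r - r^2 - 2 * r^2 / (1 - r)) ^ 24 \<le> ?L ^ 24"
    using real_ineq(1)[OF rpos r13] by (intro power_mono) auto
  then have "r * (1 - r - r^2 - 2 * r^2 / (1 - r)) ^ 24 \<le> r * ?L ^ 24"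
    using rpos by simp
  then show "norm (modular_Delta \<tau>) \<ge>
              exp (-2 * pi * Im \<tau>) *
              (1 - exp (-2 * pi * Im \<tau>) - exp (-4 * pi * Im \<tau>)
                 - 2 * exp (-4 * pi * Im \<tau>) / (1 - exp (-2 * pi * Im \<tau>))) ^ 24"
    unfolding Delta_eq[OF q1] nq r2 r_def[symmetric] .
next
  fix \<tau> :: complex
  assume h: "Im \<tau> > 0"
  define r where "r = exp (-2 * pi * Im \<tau>)"
  have r2: "exp (-4 * pi * Im \<tau>) = r^2" unfolding r_def
    by (simp add: power2_eq_square exp_add[symmetric])
  have r4: "exp (-8 * pi * Im \<tau>) = r^4" unfolding r_def
    by (simp add: exp_of_nat_mult[symmetric])
  have rpos: "0 < r" unfolding r_def by simp
  have r1: "r < 1" using h unfolding r_def by simp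
  have nq: "norm (nome \<tau>) = r" by (simp add: norm_nome r_def)
  have q1: "norm (nome \<tau>) < 1" using nq r1 by simp
  let ?L = "norm (prodinf (\<lambda>i. 1 - nome \<tau> ^ Suc i))"
  have "?L \<le> 1 + 2 * r + 2 * r^4 / (1 - r^2)"
    using L_upper[OF q1] nq by simp
  then have "?L ^ 24 \<le> (1 + 2 * r + 2 * r^4 / (1 - r^2)) ^ 24"
    by (intro power_mono) auto
  then have "r * ?L ^ 24 \<le> r * (1 + 2 * r + 2 * r^4 / (1 - r^2)) ^ 24"
    using rpos by simp
  then show "norm (modular_Delta \<tau>) \<le>
              exp (-2 * pi * Im \<tau>) *
              (1 + 2 * exp (-2 * pi * Im \<tau>)
                 + 2 * exp (-8 * pi * Im \<tau>) / (1 - exp (-4 * pi * Im \<tau>))) ^ 24"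
    unfolding Delta_eq[OF q1] nq r2 r4 r_def[symmetric] .
qed

end
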